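(* Let $\mathcal N$ be an $(M,N,q)$-Schreier norming set, $x^*\in\mathcal N$, $k\in\mathbb N$, and let $\mathcal T$ be a functional tree of $x^*$, so that $$x^*=\sum_{\beta\in\mathcal T\ \text{terminal}}\frac{\prod_{\alpha\preceq\beta}\gamma_\alpha}{\prod_{\alpha\prec\beta}m_\alpha}\,e^*_{j_\beta}.$$ Then $$\Big\{j_\beta:\ \beta\ \text{terminal},\ |x^*(e_{j_\beta})|\ge\frac{2\,|\prod_{\alpha\preceq\beta}\gamma_\alpha|}{m_{2k}},\ j_\beta\ge 2k\Big\}\in S_{p_k-1}.$$
   Context: Notation. $c_{00}$ is the space of finitely supported real sequences, $(e_i)_{i\ge1}$ its unit vector basis and $(e_i^* )_{i\ge1}$ the biorthogonal functionals. For a functional $x^*=\sum_i a_ie_i^*$, ${\rm supp}\,x^*=\{i:a_i\neq0\}$. For finite $E,F\subset\mathbb N$, $E<F$ means $\max E<\min F$. $Ba(\ell_q)$ is the closed unit ball of $\ell_q$ (applied to finite scalar sequences). For an interval $E\subset\mathbb N$, $Ex^*$ is the restriction of $x^*$ to the coordinates in $E$. Schreier families: $S_0=\{\{n\}:n\in\mathbb N\}\cup\{\emptyset\}$ and $S_{n+1}=\{\bigcup_{i=1}^mF_i: m\in\mathbb N,\ F_i\in S_n,\ m\le\min F_1,\ F_1<\dots<F_m\}\cup\{\emptyset\}$. Successive finite sets $E_1<\dots<E_k$ are $S_n$-admissible if $\{\min E_1,\dots,\min E_k\}\in S_n$; a finite block sequence $x_1^*,\dots,x_k^*$ is $S_n$-admissible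 if $({\rm supp}\,x_i^* )_{i=1}^k$ is. Sequences. $M=(m_i)$, $N=(n_i)$ are increasing sequences of positive integers such that (i) $m_1>3$, $m_2=m_1^5$, $m_{2j+1}=m_{2j}^5$ for $j\ge1$, and there is an increasing sequence $(s_i)$ of positive integers with $m_{2j}=\prod_{i=1}^{j-1}m_{2i}^{s_i}$ for $j\ge2$; (ii) defining for $j\ge2$ $f_j=\max\{\rho n_1+\sum_{1\le i<j}\rho_in_{2i}:\ \rho,\rho_i\in\mathbb N\cup\{0\},\ m_1^{\rho}\prod_{1\le i<j}m_{2i}^{\rho_i}<m_{2j}\}$, one has $4f_j<n_{2j}$ for all $j\ge2$, and $5n_1<n_2$. For $k\ge1$ put $p_k=5n_1+\sum_{1\le i<k}s_in_{2i}$ (so $p_1=5n_1$). Norming sets. A set $\mathcal N\subset{\rm span}\{e_i^*\}$ is norming if it contains every $e_n^*$, satisfies $|x^*(e_n)|\le1$ for all $x^*\in\mathcal N$, $n\in\mathbb N$, is symmetric, and $Ex^*\in\mathcal N$ for all $x^*\in\mathcal N$ and intervals $E\subset\mathbb N$. $(M,N,q)$-Schreier. Let $1<p,q<\infty$, $1/p+1/q=1$. For $k\ge1$ let $\mathcal N_k$ be the set of all $\frac1{m_{2k}}\sum_{i=1}^d\gamma_ix_i^*$ where $d\in\mathbb N$, $(\gamma_i)_{i=1}^d\in Ba(\ell_q)$, and $x_1^*,\dots,x_d^*\in\mathcal N$ is an $S_{n_{2k}}$-admissible block sequence. Let $\mathcal N^q_\infty$ be the union over $k\ge0$ of the sets of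 all $\frac1{m_{2k+1}}\sum_{i=1}^d\gamma_iEx_i^*$ where $(\gamma_i)\in 2^{1/p}Ba(\ell_q)$, $E$ is an interval of $\mathbb N$, $x_1^*,\dots,x_d^*$ is an $S_{n_{2k+1}}$-admissible block sequence with $x_i^*\in\mathcal N_{j_i}$ and $j_1,\dots,j_d$ pairwise distinct. A norming set $\mathcal N$ is $(M,N,q)$-Schreier if $\mathcal N_j\subset\mathcal N$ for all $j\ge1$ and $\mathcal N\subset\bigcup_{j\ge1}\mathcal N_j\cup\mathcal N^q_\infty\cup\{\pm e_n^*:n\in\mathbb N\}$. Functional trees. A finite partially ordered set $(\mathcal T,\preceq)$ is a tree if $\{\beta:\beta\preceq\alpha\}$ is linearly ordered for each $\alpha$; it is rooted if it has a unique minimal element (the root). $\alpha\prec\beta$ means $\alpha\preceq\beta$ and $\alpha\ne\beta$; $D_\alpha(\mathcal T)$ is the set of immediate successors of $\alpha$; $\alpha$ is terminal if it has no successors; a branch is a maximal linearly ordered subset. A functional tree of $x^*\in\mathcal N$ is a finite rooted tree $\mathcal T$ with root $\alpha_0$ together with, for each node $\alpha$, a functional $x^*_\alpha\in\mathcal N$ and a nonzero scalar $\gamma_\alpha$, such that: $\gamma_{\alpha_0}\in\{1,-1\}$ and $x^*=\gamma_{\alpha_0}x^*_{\alpha_0}$; if $\alpha$ is terminal then $x^*_\alpha=e^*_{j_\alpha}$ for some $j_\alpha\in\mathbb N$; if $\alpha$ is not terminal there is $j\in\mathbb N$ with (setting $m_\alpha=m_j$, $n_\alpha=n_j$) $x^*_\alpha=\frac1{m_\alpha}\sum_{\beta\in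 D_\alpha(\mathcal T)}\gamma_\beta x^*_\beta$, where the $x^*_\beta$, $\beta\in D_\alpha(\mathcal T)$, are nonzero with successive supports and form an $S_{n_\alpha}$-admissible block sequence; if $j$ is even, $(\gamma_\beta)_{\beta\in D_\alpha(\mathcal T)}\in Ba(\ell_q)$; if $j$ is odd, $(\gamma_\beta)_{\beta\in D_\alpha(\mathcal T)}\in 2^{1/p}Ba(\ell_q)$, every $\beta\in D_\alpha(\mathcal T)$ is non-terminal with $m_\beta$ of even index, and the $m_\beta$, $\beta\in D_\alpha(\mathcal T)$, are pairwise distinct. Every element of $\mathcal N$ admits at least one functional tree. For any set $A$ of pairwise incomparable nodes meeting every branch, $x^*=\sum_{\alpha\in A}\frac{\prod_{\beta\preceq\alpha}\gamma_\beta}{\prod_{\beta\prec\alpha}m_\beta}x^*_\alpha$. *)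

theory Defs
  imports Complex_Main
begin

text \<open>Indices are positive integers. Schreier families S_n as sets of finite sets of naturals.\<close>

fun schreier :: "nat \<Rightarrow> nat set set" where
  "schreier 0 = {{}} \<union> {{k} | k. k \<ge> 1}"
| "schreier (Suc n) = {{}} \<union>
     {\<Union>(set Fs) | Fs. Fs \<noteq> [] \<and> (\<forall>F\<in>set Fs. F \<in> schreier n \<and> F \<noteq> {})
        \<and> sorted_wrt (\<lambda>A B. Max A < Min B) Fs \<and> length Fs \<le> Min (hd Fs)}"

type_synonym functional = "nat \<Rightarrow> real"

definition supp :: "functional \<Rightarrow> nat set" where
  "supp x = {i. x i \<noteq> 0}"

definition ustar :: "nat \<Rightarrow> functional" where
  "ustar j = (\<lambda>i. if i = j then 1 else 0)"

definition is_interval :: "nat set \<Rightarrow> bool" where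
  "is_interval E \<longleftrightarrow> (\<forall>a b c. a \<in> E \<longrightarrow> c \<in> E \<longrightarrow> a \<le> b \<longrightarrow> b \<le> c \<longrightarrow> b \<in> E)"

definition restr :: "nat set \<Rightarrow> functional \<Rightarrow> functional" where
  "restr E x = (\<lambda>i. if i \<in> E then x i else 0)"

definition block_seq :: "functional list \<Rightarrow> bool" where
  "block_seq xs \<longleftrightarrow> (\<forall>x\<in>set xs. x \<noteq> (\<lambda>_. 0) \<and> finite (supp x))
     \<and> sorted_wrt (\<lambda>x y. Max (supp x) < Min (supp y)) xs"

definition admissible :: "nat \<Rightarrow> functional list \<Rightarrow> bool" where
  "admissible k xs \<longleftrightarrow> block_seq xs \<and> {Min (supp x) | x. x \<in> set xs} \<in> schreier k"

definition lq_ball :: "real \<Rightarrow> real \<Rightarrow> real list \<Rightarrow> bool" where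
  "lq_ball q r gs \<longleftrightarrow> (\<Sum>g\<leftarrow>gs. \<bar>g\<bar> powr q) powr (1 / q) \<le> r"

definition lin_comb :: "real list \<Rightarrow> functional list \<Rightarrow> functional" where
  "lin_comb gs xs = (\<lambda>i. (\<Sum>(g, x)\<leftarrow>zip gs xs. g * x i))"

definition norming :: "functional set \<Rightarrow> bool" where
  "norming NN \<longleftrightarrow>
     (\<forall>x\<in>NN. finite (supp x) \<and> x 0 = 0)
   \<and> (\<forall>j\<ge>1. ustar j \<in> NN)
   \<and> (\<forall>x\<in>NN. \<forall>i. \<bar>x i\<bar> \<le> 1)
   \<and> (\<forall>x\<in>NN. (\<lambda>i. - x i) \<in> NN)
   \<and> (\<forall>x\<in>NN. \<forall>E. is_interval E \<longrightarrow> restr E x \<in> NN)"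

definition f_seq :: "(nat \<Rightarrow> nat) \<Rightarrow> (nat \<Rightarrow> nat) \<Rightarrow> nat \<Rightarrow> nat" where
  "f_seq m n j = Max {\<rho> * n 1 + (\<Sum>i\<in>{1..<j}. \<rho>s i * n (2 * i)) | \<rho> \<rho>s.
       m 1 ^ \<rho> * (\<Prod>i\<in>{1..<j}. m (2 * i) ^ \<rho>s i) < m (2 * j)}"

definition MN_seqs :: "(nat \<Rightarrow> nat) \<Rightarrow> (nat \<Rightarrow> nat) \<Rightarrow> (nat \<Rightarrow> nat) \<Rightarrow> bool" where
  "MN_seqs m n s \<longleftrightarrow>
     (\<forall>i\<ge>1. m i < m (Suc i)) \<and> (\<forall>i\<ge>1. n i < n (Suc i)) \<and> n 1 \<ge> 1
   \<and> m 1 > 3 \<and> m 2 = m 1 ^ 5 \<and> (\<forall>j\<ge>1. m (2 * j + 1) = m (2 * j) ^ 5)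
   \<and> s 1 \<ge> 1 \<and> (\<forall>i\<ge>1. s i < s (Suc i))
   \<and> (\<forall>j\<ge>2. m (2 * j) = (\<Prod>i\<in>{1..<j}. m (2 * i) ^ s i))
   \<and> (\<forall>j\<ge>2. 4 * f_seq m n j < n (2 * j)) \<and> 5 * n 1 < n 2"

definition p_seq :: "(nat \<Rightarrow> nat) \<Rightarrow> (nat \<Rightarrow> nat) \<Rightarrow> nat \<Rightarrow> nat" where
  "p_seq n s k = 5 * n 1 + (\<Sum>i\<in>{1..<k}. s i * n (2 * i))"

definition NN_k :: "(nat \<Rightarrow> nat) \<Rightarrow> (nat \<Rightarrow> nat) \<Rightarrow> real \<Rightarrow> functional set \<Rightarrow> nat \<Rightarrow> functional set" where
  "NN_k m n q NN k = {(\<lambda>i. (1 / real (m (2 * k))) * lin_comb gs xs i) | gs xs.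
      xs \<noteq> [] \<and> length gs = length xs \<and> lq_ball q 1 gs
      \<and> set xs \<subseteq> NN \<and> admissible (n (2 * k)) xs}"

definition NN_inf :: "(nat \<Rightarrow> nat) \<Rightarrow> (nat \<Rightarrow> nat) \<Rightarrow> real \<Rightarrow> real \<Rightarrow> functional set \<Rightarrow> functional set" where
  "NN_inf m n p q NN = (\<Union>k. {(\<lambda>i. (1 / real (m (2 * k + 1))) * lin_comb gs (map (restr E) xs) i)
      | gs E xs js. xs \<noteq> [] \<and> length gs = length xs \<and> lq_ball q (2 powr (1 / p)) gs
      \<and> is_interval E \<and> admissible (n (2 * k + 1)) xs
      \<and> length js = length xs \<and> distinct js \<and> (\<forall>j\<in>set js. j \<ge> 1)
      \<and> (\<forall>i<length xs. xs ! i \<in> NN_k m n q NN (js ! i))})"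

definition MNq_schreier :: "(nat \<Rightarrow> nat) \<Rightarrow> (nat \<Rightarrow> nat) \<Rightarrow> real \<Rightarrow> real \<Rightarrow> functional set \<Rightarrow> bool" where
  "MNq_schreier m n p q NN \<longleftrightarrow> norming NN
     \<and> (\<forall>j\<ge>1. NN_k m n q NN j \<subseteq> NN)
     \<and> NN \<subseteq> (\<Union>j\<in>{1..}. NN_k m n q NN j) \<union> NN_inf m n p q NN
            \<union> {ustar j | j. j \<ge> 1} \<union> {(\<lambda>i. - ustar j i) | j. j \<ge> 1}"

text \<open>A node is either terminal (Leaf j, functional e*_j) or a node with weight index j
  (m_alpha = m_j, n_alpha = n_j) and a list of immediate successors, each with its scalar gamma.\<close>
datatype ftree = Leaf nat | Node nat "(real \<times> ftree) list"

fun tval :: "(nat \<Rightarrow> nat) \<Rightarrow> ftree \<Rightarrow> functional" where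
  "tval m (Leaf j) = ustar j"
| "tval m (Node j cs) = (\<lambda>i. (1 / real (m j)) * sum_list (map (\<lambda>(g, c). g * tval m c i) cs))"

definition node_index :: "ftree \<Rightarrow> nat" where
  "node_index t = (case t of Leaf j \<Rightarrow> j | Node j _ \<Rightarrow> j)"

definition is_node :: "ftree \<Rightarrow> bool" where
  "is_node t = (case t of Leaf _ \<Rightarrow> False | Node _ cs \<Rightarrow> cs \<noteq> [])"

fun wf_tree :: "(nat \<Rightarrow> nat) \<Rightarrow> (nat \<Rightarrow> nat) \<Rightarrow> real \<Rightarrow> real \<Rightarrow> functional set \<Rightarrow> ftree \<Rightarrow> bool" where
  "wf_tree m n p q NN (Leaf j) \<longleftrightarrow> j \<ge> 1 \<and> ustar j \<in> NN"
| "wf_tree m n p q NN (Node j cs) \<longleftrightarrow> j \<ge> 1 \<and> cs \<noteq> [] \<and> tval m (Node j cs) \<in> NN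
     \<and> (\<forall>gc\<in>set cs. fst gc \<noteq> 0 \<and> tval m (snd gc) \<noteq> (\<lambda>_. 0) \<and> wf_tree m n p q NN (snd gc))
     \<and> admissible (n j) (map (\<lambda>(g, c). tval m c) cs)
     \<and> (even j \<longrightarrow> lq_ball q 1 (map fst cs))
     \<and> (odd j \<longrightarrow> lq_ball q (2 powr (1 / p)) (map fst cs)
          \<and> (\<forall>gc\<in>set cs. is_node (snd gc) \<and> even (node_index (snd gc)))
          \<and> distinct (map (\<lambda>(g, c). node_index c) cs))"

text \<open>For each terminal node beta: (j_beta, product of the gammas of the nodes strictly
  below the root up to and including beta, product of m_alpha over the non-terminal
  nodes alpha strictly preceding beta).\<close>
fun leaves :: "(nat \<Rightarrow> nat) \<Rightarrow> ftree \<Rightarrow> (nat \<times> real \<times> real) list" where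
  "leaves m (Leaf j) = [(j, 1, 1)]"
| "leaves m (Node j cs) = concat (map (\<lambda>(g, c).
       map (\<lambda>(i, a, b). (i, g * a, real (m j) * b)) (leaves m c)) cs)"

definition functional_tree :: "(nat \<Rightarrow> nat) \<Rightarrow> (nat \<Rightarrow> nat) \<Rightarrow> real \<Rightarrow> real \<Rightarrow> functional set
    \<Rightarrow> functional \<Rightarrow> real \<Rightarrow> ftree \<Rightarrow> bool" where
  "functional_tree m n p q NN x g0 t \<longleftrightarrow> (g0 = 1 \<or> g0 = -1) \<and> x = (\<lambda>i. g0 * tval m t i)
     \<and> wf_tree m n p q NN t"

end

theory Submission
  imports Defs
begin


lemma schreier_finite: "A \<in> schreier n \<Longrightarrow> finite A"
proof (induction n arbitrary: A)
  case 0 then show ?case by auto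
next
  case (Suc n) then show ?case by auto
qed

lemma schreier_empty: "{} \<in> schreier n"
  by (cases n) auto

lemma schreier_single: "j \<ge> 1 \<Longrightarrow> {j} \<in> schreier n"
proof (induction n)
  case 0 then show ?case by auto
next
  case (Suc n)
  have "{j} = \<Union>(set [{j}])" by simp
  moreover have "[{j}] \<noteq> [] \<and> (\<forall>F\<in>set [{j}]. F \<in> schreier n \<and> F \<noteq> {})
        \<and> sorted_wrt (\<lambda>A B. Max A < Min B) [{j}] \<and> length [{j}] \<le> Min (hd [{j}])"
    using Suc by auto
  ultimately show ?case by (simp only: schreier.simps) blast
qed

lemma schreier_SucI:
  assumes "\<forall>F\<in>set Fs. F \<in> schreier n \<and> F \<noteq> {}"
    and "sorted_wrt (\<lambda>A B. \<forall>x\<in>A. \<forall>y\<in>B. x < y) Fs"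
    and "Fs \<noteq> [] \<Longrightarrow> length Fs \<le> Min (hd Fs)"
  shows "\<Union>(set Fs) \<in> schreier (Suc n)"
proof (cases "Fs = []")
  case True then show ?thesis by simp
next
  case False
  have fin: "\<forall>F\<in>set Fs. finite F" using assms(1) schreier_finite by blast
  have "sorted_wrt (\<lambda>A B. Max A < Min B) Fs"
    using assms(2)
  proof (rule sorted_wrt_mono_rel[rotated])
    fix A B assume "A \<in> set Fs" "B \<in> set Fs" "\<forall>x\<in>A. \<forall>y\<in>B. x < y"
    then show "Max A < Min B" using fin assms(1) by auto
  qed
  then show ?thesis using False assms by (simp only: schreier.simps) blast
qed

lemma schreier_Suc_mono: "A \<in> schreier n \<Longrightarrow> A \<in> schreier (Suc n)"
proof (induction n arbitrary: A)
  case 0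
  then show ?case using schreier_single[of _ 1] schreier_empty by auto
next
  case (Suc n)
  show ?case
  proof (cases "A = {}")
    case True then show ?thesis by (simp add: schreier_empty)
  next
    case False
    then obtain Fs where "A = \<Union>(set Fs)" "Fs \<noteq> []" "\<forall>F\<in>set Fs. F \<in> schreier n \<and> F \<noteq> {}"
        "sorted_wrt (\<lambda>A B. Max A < Min B) Fs" "length Fs \<le> Min (hd Fs)"
      using Suc.prems by auto
    then show ?thesis using Suc.IH
      by (simp only: schreier.simps(2)[of "Suc n"]) blast
  qed
qed

lemma schreier_mono: "n \<le> n' \<Longrightarrow> A \<in> schreier n \<Longrightarrow> A \<in> schreier n'"
  by (induction n' rule: dec_induct) (blast intro: schreier_Suc_mono)+

definition prel :: "nat \<times> nat set \<Rightarrow> nat \<times> nat set \<Rightarrow> bool" where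
  "prel p p' \<longleftrightarrow> fst p < fst p' \<and> (\<forall>x\<in>snd p. \<forall>y\<in>snd p'. x < y)"

definition comp_hyp :: "nat \<Rightarrow> nat set \<Rightarrow> (nat \<times> nat set) list \<Rightarrow> bool" where
  "comp_hyp b M ps \<longleftrightarrow> sorted_wrt prel ps \<and>
     (\<forall>p\<in>set ps. fst p \<in> M \<and> snd p \<noteq> {} \<and> snd p \<in> schreier b \<and> (\<forall>x\<in>snd p. fst p \<le> x))"

lemma split_lemma:
  assumes IH: "\<forall>M ps. M \<in> schreier c \<longrightarrow> comp_hyp b M ps \<longrightarrow> \<Union>(snd ` set ps) \<in> schreier (b + c)"
  shows "(\<forall>F\<in>set Fs. F \<in> schreier c \<and> F \<noteq> {}) \<Longrightarrow> sorted_wrt (\<lambda>A B. Max A < Min B) Fs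
    \<Longrightarrow> comp_hyp b (\<Union>(set Fs)) ps
    \<Longrightarrow> \<exists>Ks. length Ks = length Fs \<and> (\<forall>K\<in>set Ks. K \<in> schreier (b + c))
        \<and> \<Union>(set Ks) = \<Union>(snd ` set ps) \<and> sorted_wrt (\<lambda>A B. \<forall>x\<in>A. \<forall>y\<in>B. x < y) Ks
        \<and> (\<forall>i<length Ks. \<forall>x\<in>Ks!i. Min (Fs!i) \<le> x)"
proof (induction Fs arbitrary: ps)
  case Nil
  then have "ps = []" unfolding comp_hyp_def by (cases ps) auto
  then show ?case by (intro exI[of _ "[]"]) auto
next
  case (Cons F Fs)
  define ps1 where "ps1 = takeWhile (\<lambda>p. fst p \<in> F) ps"
  define ps2 where "ps2 = dropWhile (\<lambda>p. fst p \<in> F) ps"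
  have ps: "ps = ps1 @ ps2" unfolding ps1_def ps2_def by simp
  have srt: "sorted_wrt prel ps" using Cons.prems(3) unfolding comp_hyp_def by simp
  have hp: "\<forall>p\<in>set ps. fst p \<in> \<Union>(set (F#Fs)) \<and> snd p \<noteq> {} \<and> snd p \<in> schreier b \<and> (\<forall>x\<in>snd p. fst p \<le> x)"
    using Cons.prems(3) unfolding comp_hyp_def by simp
  have finF: "finite F" using Cons.prems(1) schreier_finite by auto
  have FF: "F \<in> schreier c" using Cons.prems(1) by auto
  have c1: "comp_hyp b F ps1"
  proof -
    have "sorted_wrt prel ps1" using srt ps sorted_wrt_append by metis
    moreover have "\<forall>p\<in>set ps1. fst p \<in> F \<and> p \<in> set ps"
      unfolding ps1_def by (meson set_takeWhileD)
    ultimately show ?thesis unfolding comp_hyp_def using hp by blast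
  qed
  have c2: "comp_hyp b (\<Union>(set Fs)) ps2"
  proof -
    have "\<forall>p\<in>set ps2. fst p \<in> \<Union>(set Fs)"
    proof (cases ps2)
      case Nil then show ?thesis by simp
    next
      case (Cons q qs)
      have qn: "fst q \<notin> F" using Cons hd_dropWhile[of "\<lambda>p. fst p \<in> F" ps] unfolding ps2_def
        by (metis list.distinct(1) list.sel(1))
      have qin: "q \<in> set ps" using ps Cons by auto
      then obtain F' where F': "F' \<in> set Fs" "fst q \<in> F'" using hp qn by auto
      have "Max F < Min F'" using Cons.prems(2) F' by auto
      moreover have "Min F' \<le> fst q" using F' Cons.prems(1) schreier_finite by auto
      ultimately have qb: "Max F < fst q" by simp
      show ?thesis
      proof
        fix p assume p: "p \<in> set ps2"
        have "fst q \<le> fst p"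
        proof (cases "p = q")
          case False
          then have "p \<in> set qs" using p Cons by auto
          then have "prel q p" using srt ps Cons by (auto simp: sorted_wrt_append)
          then show ?thesis unfolding prel_def by simp
        qed simp
        then have "fst p \<notin> F" using qb finF by (meson Max_ge leD le_less_trans)
        moreover have "p \<in> set ps" using p ps by auto
        ultimately show "fst p \<in> \<Union>(set Fs)" using hp by auto
      qed
    qed
    then show ?thesis unfolding comp_hyp_def using srt hp ps by (auto simp: sorted_wrt_append)
  qed
  obtain Ks where Ks: "length Ks = length Fs" "\<forall>K\<in>set Ks. K \<in> schreier (b + c)"
      "\<Union>(set Ks) = \<Union>(snd ` set ps2)" "sorted_wrt (\<lambda>A B. \<forall>x\<in>A. \<forall>y\<in>B. x < y) Ks"
      "\<forall>i<length Ks. \<forall>x\<in>Ks!i. Min (Fs!i) \<le> x"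
    using Cons.IH[OF _ _ c2] Cons.prems(1,2) by auto
  define K0 where "K0 = \<Union>(snd ` set ps1)"
  have K0: "K0 \<in> schreier (b + c)" using IH FF c1 K0_def by simp
  have K0min: "\<forall>x\<in>K0. Min F \<le> x"
  proof
    fix x assume "x \<in> K0"
    then obtain p where p: "p \<in> set ps1" "x \<in> snd p" unfolding K0_def by auto
    then have "fst p \<in> F" "fst p \<le> x" using c1 unfolding comp_hyp_def by auto
    then show "Min F \<le> x" using finF by (meson Min_le le_trans)
  qed
  have srt2: "\<forall>K\<in>set Ks. \<forall>x\<in>K0. \<forall>y\<in>K. x < y"
  proof (intro ballI)
    fix K x y assume "K \<in> set Ks" "x \<in> K0" "y \<in> K"
    then obtain p q where "p \<in> set ps1" "x \<in> snd p" "q \<in> set ps2" "y \<in> snd q"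
      using Ks(3) unfolding K0_def by blast
    then have "prel p q" using srt ps by (auto simp: sorted_wrt_append)
    then show "x < y" using \<open>x \<in> snd p\<close> \<open>y \<in> snd q\<close> unfolding prel_def by auto
  qed
  show ?case
  proof (intro exI[of _ "K0 # Ks"] conjI)
    show "\<forall>i<length (K0 # Ks). \<forall>x\<in>(K0 # Ks) ! i. Min ((F # Fs) ! i) \<le> x"
      using K0min Ks(5) by (auto simp: nth_Cons split: nat.splits)
  qed (use Ks K0 srt2 ps K0_def in auto)
qed

lemma comp_lemma: "M \<in> schreier c \<Longrightarrow> comp_hyp b M ps \<Longrightarrow> \<Union>(snd ` set ps) \<in> schreier (b + c)"
proof (induction c arbitrary: M ps)
  case 0
  have Msub: "\<exists>k. M \<subseteq> {k}" using 0(1) by auto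
  show ?case
  proof (cases ps)
    case Nil then show ?thesis by (simp add: schreier_empty)
  next
    case (Cons p ps')
    show ?thesis
    proof (cases ps')
      case Nil
      then show ?thesis using 0(2) Cons unfolding comp_hyp_def by auto
    next
      case (Cons q qs)
      have "fst p < fst q" "fst p \<in> M" "fst q \<in> M"
        using 0(2) \<open>ps = p # ps'\<close> Cons unfolding comp_hyp_def prel_def by auto
      then show ?thesis using Msub by (metis less_irrefl singletonD subsetD)
    qed
  qed
next
  case (Suc c)
  show ?case
  proof (cases "M = {}")
    case True
    then have "ps = []" using Suc.prems(2) unfolding comp_hyp_def by (cases ps) auto
    then show ?thesis by (simp add: schreier_empty)
  next
    case False
    then obtain Fs where Fs: "M = \<Union>(set Fs)" "Fs \<noteq> []" "\<forall>F\<in>set Fs. F \<in> schreier c \<and> F \<noteq> {}"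
        "sorted_wrt (\<lambda>A B. Max A < Min B) Fs" "length Fs \<le> Min (hd Fs)"
      using Suc.prems(1) by auto
    obtain Ks where Ks: "length Ks = length Fs" "\<forall>K\<in>set Ks. K \<in> schreier (b + c)"
        "\<Union>(set Ks) = \<Union>(snd ` set ps)" "sorted_wrt (\<lambda>A B. \<forall>x\<in>A. \<forall>y\<in>B. x < y) Ks"
        "\<forall>i<length Ks. \<forall>x\<in>Ks!i. Min (Fs!i) \<le> x"
      proof -
      have IH': "\<forall>M ps. M \<in> schreier c \<longrightarrow> comp_hyp b M ps \<longrightarrow> \<Union>(snd ` set ps) \<in> schreier (b + c)"
        using Suc.IH by blast
      show ?thesis using split_lemma[OF IH' Fs(3) Fs(4)] Suc.prems(2) Fs(1) that by blast
    qed
    define Kf where "Kf = filter (\<lambda>K. K \<noteq> {}) Ks"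
    have "\<Union>(set Kf) \<in> schreier (Suc (b + c))"
    proof (rule schreier_SucI)
      show "\<forall>F\<in>set Kf. F \<in> schreier (b + c) \<and> F \<noteq> {}" using Ks(2) Kf_def by auto
      show "sorted_wrt (\<lambda>A B. \<forall>x\<in>A. \<forall>y\<in>B. x < y) Kf" using Ks(4) Kf_def
        by (simp add: sorted_wrt_filter)
      assume ne: "Kf \<noteq> []"
      have "length Kf \<le> length Fs" using Ks(1) Kf_def by (metis length_filter_le)
      also have "\<dots> \<le> Min (hd Fs)" by (rule Fs(5))
      also have "Min (hd Fs) \<le> Min (hd Kf)"
      proof -
        have "hd Kf \<in> set Kf" using ne by simp
        then have hk: "hd Kf \<in> set Ks" "hd Kf \<noteq> {}" using Kf_def by auto
        then obtain i where i: "i < length Ks" "Ks ! i = hd Kf" by (metis in_set_conv_nth)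
        have fin: "finite (hd Kf)" using hk Ks(2) schreier_finite by blast
        have "Min (hd Kf) \<in> Ks ! i" using i hk fin by simp
        then have "Min (Fs ! i) \<le> Min (hd Kf)" using Ks(5) i by blast
        moreover have "Min (hd Fs) \<le> Min (Fs ! i)"
        proof (cases i)
          case 0 then show ?thesis using Fs(2) by (simp add: hd_conv_nth)
        next
          case (Suc i')
          have "Max (Fs!0) < Min (Fs!i)" using Fs(4) i Ks(1) Suc
            by (auto simp: sorted_wrt_iff_nth_less)
          moreover have "Min (Fs!0) \<le> Max (Fs!0)"
            using Fs(3) Fs(2) schreier_finite
            by (metis Max_in Min_le nth_mem length_greater_0_conv)
          ultimately show ?thesis using Fs(2) by (simp add: hd_conv_nth)
        qed
        ultimately show ?thesis by simp
      qed
      finally show "length Kf \<le> Min (hd Kf)" .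
    qed
    moreover have "\<Union>(set Kf) = \<Union>(set Ks)" unfolding Kf_def by auto
    ultimately show ?thesis using Ks(3) by simp
  qed
qed



definition gm :: "(nat \<Rightarrow> nat) \<Rightarrow> nat \<Rightarrow> nat" where
  "gm f i = (if i = 0 then f 1 else f (2 * i))"

lemma mono_gen: "(\<forall>i\<ge>1. f i < f (Suc i)) \<Longrightarrow> 1 \<le> i \<Longrightarrow> i < j \<Longrightarrow> (f i :: nat) < f j"
proof (induction j)
  case 0 then show ?case by simp
next
  case (Suc j)
  then show ?case by (cases "i = j") (auto intro: less_trans)
qed

lemma mono_le: "(\<forall>i\<ge>1. f i < f (Suc i)) \<Longrightarrow> 1 \<le> i \<Longrightarrow> i \<le> j \<Longrightarrow> (f i :: nat) \<le> f j"
  using mono_gen[of f i j] by (cases "i = j") auto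

lemma prod_list_ge1: "\<forall>x\<in>set L. 1 \<le> g x \<Longrightarrow> 1 \<le> prod_list (map g L :: nat list)"
  by (induction L) auto

lemma prod_count:
  "set L \<subseteq> {0..<j} \<Longrightarrow> prod_list (map (gm f) L) = f 1 ^ count_list L 0 * (\<Prod>i\<in>{1..<j}. f (2*i) ^ count_list L i)"
proof (induction L)
  case Nil then show ?case by simp
next
  case (Cons a L)
  then have IH: "prod_list (map (gm f) L) = f 1 ^ count_list L 0 * (\<Prod>i\<in>{1..<j}. f (2*i) ^ count_list L i)"
    and a: "a < j" by auto
  show ?case
  proof (cases "a = 0")
    case True
    have "(\<Prod>i\<in>{1..<j}. f (2*i) ^ count_list (a#L) i) = (\<Prod>i\<in>{1..<j}. f (2*i) ^ count_list L i)"
      using True by (intro prod.cong) auto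
    moreover have "gm f 0 = f 1" by (simp add: gm_def)
    ultimately show ?thesis using IH True by simp
  next
    case False
    have aI: "a \<in> {1..<j}" using False a by auto
    have "(\<Prod>i\<in>{1..<j}. f (2*i) ^ count_list (a#L) i)
        = (\<Prod>i\<in>{1..<j}. f (2*i) ^ count_list L i * (if i = a then f (2*i) else 1))"
      by (intro prod.cong) auto
    also have "\<dots> = (\<Prod>i\<in>{1..<j}. f (2*i) ^ count_list L i) * f (2*a)"
      using aI by (simp add: prod.distrib)
    moreover have "gm f a = f (2*a)" using False by (simp add: gm_def)
    ultimately show ?thesis using IH False by simp
  qed
qed

lemma sum_count:
  assumes "set L \<subseteq> {0..<j}" "j \<ge> 1"
  shows "sum_list (map (gm f) L) = count_list L 0 * f 1 + (\<Sum>i\<in>{1..<j}. count_list L i * f (2*i))"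
proof -
  have "sum_list (map (gm f) L) = (\<Sum>x\<in>{0..<j}. count_list L x * gm f x)"
    using assms by (intro sum_list_map_eq_sum_count2) auto
  also have "{0..<j} = insert 0 {1..<j}" using assms(2) by auto
  also have "(\<Sum>x\<in>insert 0 {1..<j}. count_list L x * gm f x)
      = count_list L 0 * f 1 + (\<Sum>i\<in>{1..<j}. count_list L i * f (2*i))"
    by (simp add: gm_def)
  finally show ?thesis .
qed

lemma factor_le_prod: "finite I \<Longrightarrow> i \<in> I \<Longrightarrow> (\<forall>x\<in>I. 1 \<le> g x) \<Longrightarrow> (g i :: nat) \<le> prod g I"
  by (metis dvd_imp_le dvd_prodI not_one_le_zero prod_pos zero_less_iff_neq_zero)

lemma m_ge2:
  assumes mono: "\<forall>i\<ge>1. m i < m (Suc i)" and m1: "m 1 > 3" and "i \<ge> 1"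
  shows "m i \<ge> (4::nat)"
  using mono_le[OF mono, of 1 i] assms by auto

lemma f_bound:
  assumes mono: "\<forall>i\<ge>1. m i < m (Suc i)" and m1: "m 1 > 3" and j: "j \<ge> 1"
    and L: "set L \<subseteq> {0..<j}" "prod_list (map (gm m) L) < m (2*j)"
  shows "sum_list (map (gm n) L) \<le> f_seq m n j"
proof -
  define S where "S = {\<rho> * n 1 + (\<Sum>i\<in>{1..<j}. \<rho>s i * n (2 * i)) | \<rho> \<rho>s.
       m 1 ^ \<rho> * (\<Prod>i\<in>{1..<j}. m (2 * i) ^ \<rho>s i) < m (2 * j)}"
  have m2: "\<And>i. i \<ge> 1 \<Longrightarrow> m i \<ge> 2" using m_ge2[OF mono m1] by fastforce
  have "S \<subseteq> {..m (2*j) * n 1 + (\<Sum>i\<in>{1..<j}. m (2*j) * n (2 * i))}"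
  proof
    fix v assume "v \<in> S"
    then obtain \<rho> \<rho>s where v: "v = \<rho> * n 1 + (\<Sum>i\<in>{1..<j}. \<rho>s i * n (2 * i))"
      and c: "m 1 ^ \<rho> * (\<Prod>i\<in>{1..<j}. m (2 * i) ^ \<rho>s i) < m (2 * j)" unfolding S_def by auto
    have P1: "1 \<le> (\<Prod>i\<in>{1..<j}. m (2 * i) ^ \<rho>s i)"
    proof (intro prod_ge_1)
      fix i assume "i \<in> {1..<j}"
      then have "1 \<le> m (2*i)" using m2[of "2*i"] by simp
      then show "1 \<le> m (2*i) ^ \<rho>s i" by (simp add: one_le_power)
    qed
    have "\<rho> < 2 ^ \<rho>" by simp
    also have "\<dots> \<le> m 1 ^ \<rho>" using m2[of 1] by (simp add: power_mono)
    also have "\<dots> \<le> m 1 ^ \<rho> * (\<Prod>i\<in>{1..<j}. m (2 * i) ^ \<rho>s i)" using P1 by simp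
    finally have r: "\<rho> \<le> m (2*j)" using c by simp
    have rs: "\<rho>s i \<le> m (2*j)" if i: "i \<in> {1..<j}" for i
    proof -
      have "\<rho>s i < 2 ^ \<rho>s i" by simp
      also have "\<dots> \<le> m (2*i) ^ \<rho>s i" using m2[of "2*i"] i by (simp add: power_mono)
      also have "\<dots> \<le> (\<Prod>i\<in>{1..<j}. m (2 * i) ^ \<rho>s i)"
      proof -
        have "\<forall>x\<in>{1..<j}. 1 \<le> m (2*x) ^ \<rho>s x"
        proof
          fix x assume "x \<in> {1..<j}"
          then have "1 \<le> m (2*x)" using m2[of "2*x"] by simp
          then show "1 \<le> m (2*x) ^ \<rho>s x" by (simp add: one_le_power)
        qed
        then show ?thesis using i by (intro factor_le_prod) auto
      qed
      also have "\<dots> \<le> m 1 ^ \<rho> * (\<Prod>i\<in>{1..<j}. m (2 * i) ^ \<rho>s i)"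
        using m2[of 1] by (simp add: one_le_power)
      finally show ?thesis using c by simp
    qed
    have "v \<le> m (2*j) * n 1 + (\<Sum>i\<in>{1..<j}. m (2*j) * n (2 * i))"
      unfolding v using r rs by (intro add_mono sum_mono mult_right_mono) auto
    then show "v \<in> {..m (2*j) * n 1 + (\<Sum>i\<in>{1..<j}. m (2*j) * n (2 * i))}" by simp
  qed
  then have fin: "finite S" by (rule finite_subset) simp
  have "sum_list (map (gm n) L) = count_list L 0 * n 1 + (\<Sum>i\<in>{1..<j}. count_list L i * n (2*i))"
    by (rule sum_count[OF L(1) j])
  moreover have "m 1 ^ count_list L 0 * (\<Prod>i\<in>{1..<j}. m (2*i) ^ count_list L i) < m (2*j)"
    using prod_count[OF L(1), of m] L(2) by simp
  ultimately have "sum_list (map (gm n) L) \<in> S" unfolding S_def by blast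
  then show ?thesis unfolding f_seq_def S_def[symmetric] using fin by (simp add: Max_ge)
qed

lemma chunk:
  fixes g c :: "nat \<Rightarrow> nat"
  assumes M: "M > 1" and gA: "\<forall>a\<in>A. 1 \<le> g a \<and> g a < M"
    and phi: "\<forall>L. set L \<subseteq> A \<longrightarrow> prod_list (map g L) < M \<longrightarrow> sum_list (map c L) \<le> \<phi>"
  shows "set L \<subseteq> A \<Longrightarrow> prod_list (map g L) < M ^ t \<Longrightarrow> sum_list (map c L) \<le> (2*t - 1) * \<phi>"
proof (induction t arbitrary: L)
  case 0
  have "1 \<le> prod_list (map g L)" using 0 gA by (intro prod_list_ge1) auto
  then show ?case using 0 by simp
next
  case (Suc t)
  show ?case
  proof (cases "prod_list (map g L) < M")
    case True
    then have "sum_list (map c L) \<le> \<phi>" using phi Suc.prems by blast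
    also have "\<dots> \<le> (2 * Suc t - 1) * \<phi>" by simp
    finally show ?thesis .
  next
    case False
    define P where "P i = (M \<le> prod_list (map g (take i L)))" for i
    have PL: "P (length L)" using False unfolding P_def by simp
    define i where "i = (LEAST i. P i)"
    have Pi: "P i" unfolding i_def using PL by (rule LeastI)
    have il: "i \<le> length L" unfolding i_def using PL by (rule Least_le)
    have i0: "i \<noteq> 0" using Pi M unfolding P_def by (cases "i = 0") auto
    then obtain i' where i': "i = Suc i'" by (cases i) auto
    have nP: "\<not> P i'" unfolding i_def using i' not_less_Least[of i' P] i_def by simp
    have tk: "take i L = take i' L @ [L ! i']" using il i' by (simp add: take_Suc_conv_app_nth)
    have set_tk: "set (take i' L) \<subseteq> A" using Suc.prems(1) by (meson order_trans set_take_subset)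
    have Li: "L ! i' \<in> A" using Suc.prems(1) il i' by (auto simp: subset_eq)
    have s1: "sum_list (map c (take i' L)) \<le> \<phi>" using phi set_tk nP unfolding P_def by auto
    have s2: "c (L ! i') \<le> \<phi>" using phi[rule_format, of "[L ! i']"] Li gA by auto
    have st: "sum_list (map c (take i L)) \<le> 2 * \<phi>" using s1 s2 tk by simp
    define R where "R = drop i L"
    have setR: "set R \<subseteq> A" unfolding R_def using Suc.prems(1) by (meson order_trans set_drop_subset)
    have PLs: "prod_list (map g L) = prod_list (map g (take i L)) * prod_list (map g R)"
      unfolding R_def by (metis append_take_drop_id map_append prod_list.append)
    have "M * prod_list (map g R) \<le> prod_list (map g L)"
      using Pi unfolding P_def PLs by simp
    also have "\<dots> < M ^ Suc t" by (rule Suc.prems(2))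
    finally have "M * prod_list (map g R) < M * M ^ t" by simp
    then have PR: "prod_list (map g R) < M ^ t" by simp
    have t1: "t \<ge> 1"
    proof (rule ccontr)
      assume "\<not> t \<ge> 1"
      then have "t = 0" by simp
      moreover have "1 \<le> prod_list (map g R)" using setR gA by (intro prod_list_ge1) auto
      ultimately show False using PR by simp
    qed
    have sR: "sum_list (map c R) \<le> (2*t - 1) * \<phi>" using Suc.IH[OF setR PR] .
    have "sum_list (map c L) = sum_list (map c (take i L)) + sum_list (map c R)"
      unfolding R_def by (metis append_take_drop_id map_append sum_list_append)
    also have "\<dots> \<le> 2 * \<phi> + (2*t - 1) * \<phi>" using st sR by simp
    also have "\<dots> = (2 * Suc t - 1) * \<phi>" using t1 by (simp add: algebra_simps)
    finally show ?thesis .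
  qed
qed

lemma filter_prod: "prod_list (map g L) = (g a :: nat) ^ count_list L a * prod_list (map g (filter (\<lambda>x. x \<noteq> a) L))"
  by (induction L) (auto simp: algebra_simps)

lemma filter_sum: "sum_list (map g L) = count_list L a * (g a :: nat) + sum_list (map g (filter (\<lambda>x. x \<noteq> a) L))"
  by (induction L) (auto simp: algebra_simps)

lemma prod12: "(\<Prod>i\<in>{1..<2::nat}. f i) = (f 1 :: nat)"
proof -
  have "{1..<2::nat} = {1}" by auto
  then show ?thesis by simp
qed

lemma sum12: "(\<Sum>i\<in>{1..<2::nat}. f i) = (f 1 :: nat)"
proof -
  have "{1..<2::nat} = {1}" by auto
  then show ?thesis by simp
qed

lemma p_seq_Suc: "j \<ge> 1 \<Longrightarrow> p_seq n s (Suc j) = p_seq n s j + s j * n (2*j)"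
  unfolding p_seq_def by simp

lemma num_main:
  assumes MN: "MN_seqs m n s"
  shows "k \<ge> 1 \<Longrightarrow> set L \<subseteq> {0..<k} \<Longrightarrow> prod_list (map (gm m) L) < m (2*k)
      \<Longrightarrow> sum_list (map (gm n) L) < p_seq n s k"
proof (induction k arbitrary: L rule: less_induct)
  case (less k)
  have mono: "\<forall>i\<ge>1. m i < m (Suc i)" and m1: "m 1 > 3" and m2: "m 2 = m 1 ^ 5"
    and m2j: "\<forall>j\<ge>2. m (2 * j) = (\<Prod>i\<in>{1..<j}. m (2 * i) ^ s i)"
    and fj: "\<forall>j\<ge>2. 4 * f_seq m n j < n (2 * j)" and n12: "5 * n 1 < n 2" and n1: "n 1 \<ge> 1"
    and nmono: "\<forall>i\<ge>1. n i < n (Suc i)"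
    using MN unfolding MN_seqs_def by auto
  have e12: "{1..<2::nat} = {1}" by auto
  have m4: "m (2*2) = m 2 ^ s 1"
  proof -
    have "m (2*2) = (\<Prod>i\<in>{1..<2}. m (2*i)^s i)" using m2j by blast
    also have "\<dots> = m 2 ^ s 1" by (subst e12) simp
    finally show ?thesis .
  qed
  have m1p: "m 1 > 1" using m1 by simp
  show ?case
  proof (cases "k \<le> 2")
    case True
    have L01: "set L \<subseteq> {0..<2}" using less.prems True by auto
    define a where "a = count_list L 0"
    define r where "r = count_list L 1"
    have PL: "prod_list (map (gm m) L) = m 1 ^ (a + 5 * r)"
      using prod_count[OF L01, of m] m2 unfolding a_def r_def prod12 by (simp add: power_add power_mult)
    have KL: "sum_list (map (gm n) L) = a * n 1 + r * n 2"
      using sum_count[OF L01, of n] unfolding a_def r_def sum12 by simp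
    show ?thesis
    proof (cases "k = 1")
      case True
      then have "r = 0" using less.prems unfolding r_def by (auto simp: count_list_0_iff)
      then have "m 1 ^ a < m 1 ^ 5" using PL less.prems True m2 by simp
      then have "a < 5" using m1p by (simp add: power_strict_increasing_iff)
      then have "a * n 1 < 5 * n 1" using n1 by simp
      then show ?thesis using KL \<open>r = 0\<close> True by (simp add: p_seq_def)
    next
      case False
      then have k2: "k = 2" using True less.prems by simp
      have "m 1 ^ (a + 5 * r) < m 1 ^ (5 * s 1)" using PL less.prems k2 m4 m2
        by (simp add: power_mult)
      then have ar: "a + 5 * r < 5 * s 1" using m1p by (simp add: power_strict_increasing_iff)
      define d where "d = s 1 - r"
      have sd: "s 1 = r + d" using ar unfolding d_def by simp
      have "a < 5 * d" using ar sd by simp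
      then have "a * n 1 < 5 * d * n 1" using n1 by simp
      also have "\<dots> \<le> d * n 2" using n12 by simp
      finally have "a * n 1 + r * n 2 < s 1 * n 2" using sd by (simp add: algebra_simps)
      moreover have "p_seq n s 2 = 5 * n 1 + s 1 * n 2" unfolding p_seq_def sum12 by simp
      ultimately show ?thesis using KL k2 by simp
    qed
  next
    case False
    then obtain j where kj: "k = Suc j" and j2: "j \<ge> 2" by (cases k) auto
    define M where "M = m (2*j)"
    define N where "N = n (2*j)"
    have Mk: "m (2*k) = M ^ Suc (s j)"
    proof -
      have k2: "2 \<le> k" using kj j2 by simp
      have "m (2*k) = (\<Prod>i\<in>{1..<k}. m (2 * i) ^ s i)" using m2j k2 by blast
      also have "\<dots> = (\<Prod>i\<in>{1..<j}. m (2 * i) ^ s i) * m (2*j) ^ s j" using j2 kj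
        by (simp add: prod.atLeastLessThan_Suc)
      also have "(\<Prod>i\<in>{1..<j}. m (2 * i) ^ s i) = M" using m2j j2 M_def by metis
      also have "M * m (2*j) ^ s j = M ^ Suc (s j)" using M_def by simp
      finally show ?thesis .
    qed
    define r where "r = count_list L j"
    define R where "R = filter (\<lambda>x. x \<noteq> j) L"
    have gmj: "gm m j = M" "gm n j = N" using j2 unfolding gm_def M_def N_def by auto
    have PL: "prod_list (map (gm m) L) = M ^ r * prod_list (map (gm m) R)"
      using filter_prod[of "gm m" L j] gmj unfolding r_def R_def by simp
    have KL: "sum_list (map (gm n) L) = r * N + sum_list (map (gm n) R)"
      using filter_sum[of "gm n" L j] gmj unfolding r_def R_def by simp
    have setR: "set R \<subseteq> {0..<j}" using less.prems kj unfolding R_def by auto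
    have gm_bd: "\<forall>a\<in>{0..<j}. 1 \<le> gm m a \<and> gm m a < M"
    proof
      fix a assume a: "a \<in> {0..<j}"
      show "1 \<le> gm m a \<and> gm m a < M"
      proof (cases "a = 0")
        case True then show ?thesis using m1 mono_gen[OF mono, of 1 "2*j"] j2
          unfolding gm_def M_def by auto
      next
        case False then show ?thesis using m1 mono_gen[OF mono, of "2*a" "2*j"] a
            mono_le[OF mono, of 1 "2*a"] unfolding gm_def M_def by auto
      qed
    qed
    have PR1: "1 \<le> prod_list (map (gm m) R)" using setR gm_bd by (intro prod_list_ge1) auto
    have Mg1: "M > 1" using gm_bd j2 by fastforce
    have "M ^ r * 1 \<le> M ^ r * prod_list (map (gm m) R)" using PR1 by (intro mult_left_mono) auto
    also have "\<dots> < M ^ Suc (s j)" using PL Mk less.prems by simp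
    finally have "M ^ r < M ^ Suc (s j)" by simp
    then have "r < Suc (s j)" using Mg1 power_strict_increasing_iff by blast
    then obtain t where t: "Suc (s j) = r + t" "t \<ge> 1"
      by (intro that[of "Suc (s j) - r"]) auto
    have "M ^ r * prod_list (map (gm m) R) < M ^ r * M ^ t" using PL Mk less.prems t
      by (simp add: power_add)
    then have PRt: "prod_list (map (gm m) R) < M ^ t" by simp
    have pk: "p_seq n s k = p_seq n s j + s j * N" using p_seq_Suc[of j n s] kj j2 N_def by simp
    show ?thesis
    proof (cases "t = 1")
      case True
      then have "prod_list (map (gm m) R) < m (2*j)" using PRt M_def by simp
      then have "sum_list (map (gm n) R) < p_seq n s j"
        using less.IH[of j R] kj j2 setR by simp
      moreover have "r = s j" using t True by simp
      ultimately show ?thesis using KL pk by simp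
    next
      case False
      then have t2: "t \<ge> 2" using t by simp
      have phi: "\<forall>L. set L \<subseteq> {0..<j} \<longrightarrow> prod_list (map (gm m) L) < M \<longrightarrow> sum_list (map (gm n) L) \<le> f_seq m n j"
        using f_bound[OF mono m1] j2 M_def by auto
      have sR: "sum_list (map (gm n) R) \<le> (2*t - 1) * f_seq m n j"
        using chunk[OF Mg1 gm_bd phi setR PRt] .
      have f4: "4 * f_seq m n j < N" using fj j2 N_def by simp
      have "4 * ((2*t - 1) * f_seq m n j) = (2*t - 1) * (4 * f_seq m n j)" by simp
      also have "\<dots> \<le> (2*t - 1) * N" using f4 by simp
      also have "\<dots> \<le> (4 * (t - 1)) * N"
      proof (rule mult_right_mono)
        show "2 * t - 1 \<le> 4 * (t - 1)" using t2 by simp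
      qed simp
      also have "\<dots> = 4 * ((t - 1) * N)" by simp
      finally have "(2*t - 1) * f_seq m n j \<le> (t - 1) * N" by simp
      then have "sum_list (map (gm n) L) \<le> r * N + (t - 1) * N" using KL sR by simp
      also have "\<dots> = (r + (t - 1)) * N" by (simp add: add_mult_distrib)
      also have "(r + (t - 1)) * N = s j * N"
      proof -
        have "r + (t - 1) = s j" using t by arith
        then show ?thesis by simp
      qed
      also have "\<dots> < p_seq n s k" using pk n1 unfolding p_seq_def by simp
      finally show ?thesis .
    qed
  qed
qed



lemma tree_induct:
  assumes "\<And>j. P (Leaf j)" "\<And>j cs. (\<And>gc. gc \<in> set cs \<Longrightarrow> P (snd gc)) \<Longrightarrow> P (Node j cs)"
  shows "P t"
  using wf_tree.induct[of "\<lambda>_ _ _ _ _ t. P t" undefined undefined undefined undefined undefined t] assms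
  by blast

lemma leaves_Node_iff:
  "(j, a, b) \<in> set (leaves m (Node J cs)) \<longleftrightarrow>
    (\<exists>g c a' b'. (g, c) \<in> set cs \<and> (j, a', b') \<in> set (leaves m c) \<and> a = g * a' \<and> b = real (m J) * b')"
proof
  assume "(j, a, b) \<in> set (leaves m (Node J cs))"
  then show "\<exists>g c a' b'. (g, c) \<in> set cs \<and> (j, a', b') \<in> set (leaves m c) \<and> a = g * a' \<and> b = real (m J) * b'"
    by (auto simp: split_beta) blast
next
  assume "\<exists>g c a' b'. (g, c) \<in> set cs \<and> (j, a', b') \<in> set (leaves m c) \<and> a = g * a' \<and> b = real (m J) * b'"
  then obtain g c a' b' where h: "(g, c) \<in> set cs" "(j, a', b') \<in> set (leaves m c)" "a = g * a'" "b = real (m J) * b'"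
    by blast
  have "(j, a, b) \<in> set (map (\<lambda>(i, a, b). (i, g * a, real (m J) * b)) (leaves m c))"
    using h(2-4) by force
  moreover have "set (map (\<lambda>(i, a, b). (i, g * a, real (m J) * b)) (leaves m c))
      \<subseteq> set (leaves m (Node J cs))"
  proof -
    have "map (\<lambda>(i, a, b). (i, g * a, real (m J) * b)) (leaves m c) \<in> set (map (\<lambda>(g, c).
       map (\<lambda>(i, a, b). (i, g * a, real (m J) * b)) (leaves m c)) cs)"
      using h(1) by force
    then show ?thesis by (simp only: leaves.simps set_concat) blast
  qed
  ultimately show "(j, a, b) \<in> set (leaves m (Node J cs))" by blast
qed

lemma sum_list_single:
  fixes xs :: "real list"
  assumes "i < length xs" "\<forall>l<length xs. l \<noteq> i \<longrightarrow> xs ! l = 0"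
  shows "sum_list xs = xs ! i"
proof -
  have "sum_list xs = (\<Sum>l\<in>{0..<length xs}. xs ! l)" by (rule sum_list_sum_nth)
  also have "\<dots> = (\<Sum>l\<in>{0..<length xs}. if l = i then xs ! i else 0)"
    by (rule sum.cong) (use assms in auto)
  also have "\<dots> = xs ! i" using assms by simp
  finally show ?thesis .
qed

lemma block_disj:
  assumes "sorted_wrt (\<lambda>x y. Max (supp x) < Min (supp y)) V" "\<forall>x\<in>set V. finite (supp x)"
    "i < length V" "l < length V" "l \<noteq> i" "j \<in> supp (V ! i)"
  shows "(V ! l) j = 0"
proof (rule ccontr)
  assume "(V ! l) j \<noteq> 0"
  then have jl: "j \<in> supp (V ! l)" unfolding supp_def by simp
  have fi: "finite (supp (V ! i))" "finite (supp (V ! l))" using assms(2-4) by auto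
  show False
  proof (cases "l < i")
    case True
    then have "Max (supp (V ! l)) < Min (supp (V ! i))" using assms(1,3) by (auto simp: sorted_wrt_iff_nth_less)
    moreover have "j \<le> Max (supp (V ! l))" "Min (supp (V ! i)) \<le> j" using fi jl assms(6) by auto
    ultimately show False by simp
  next
    case False
    then have "i < l" using assms(5) by simp
    then have "Max (supp (V ! i)) < Min (supp (V ! l))" using assms(1,4) by (auto simp: sorted_wrt_iff_nth_less)
    moreover have "j \<le> Max (supp (V ! i))" "Min (supp (V ! l)) \<le> j" using fi jl assms(6) by auto
    ultimately show False by simp
  qed
qed

lemma leaf_val:
  assumes mpos: "\<forall>j\<ge>1. m j \<ge> (1::nat)"
  shows "wf_tree m n p q NN t \<Longrightarrow> (j, a, b) \<in> set (leaves m t) \<Longrightarrow> a \<noteq> 0 \<and> b \<ge> 1 \<and> tval m t j = a / b"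
proof (induction t arbitrary: j a b rule: tree_induct)
  case (1 i)
  then show ?case by (simp add: ustar_def)
next
  case (2 J cs)
  obtain g c a' b' where gc: "(g, c) \<in> set cs" "(j, a', b') \<in> set (leaves m c)" "a = g * a'" "b = real (m J) * b'"
    using 2(3) leaves_Node_iff by metis
  have wf: "J \<ge> 1" "\<forall>gc\<in>set cs. fst gc \<noteq> 0 \<and> tval m (snd gc) \<noteq> (\<lambda>_. 0) \<and> wf_tree m n p q NN (snd gc)"
      "admissible (n J) (map (\<lambda>(g, c). tval m c) cs)"
    using 2(2) by auto
  have wfc: "wf_tree m n p q NN c" using wf gc by auto
  have IH0: "\<And>j a b. wf_tree m n p q NN c \<Longrightarrow> (j, a, b) \<in> set (leaves m c) \<Longrightarrow> a \<noteq> 0 \<and> b \<ge> 1 \<and> tval m c j = a / b"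
    using 2(1)[of "(g,c)"] gc(1) by simp
  have IH: "a' \<noteq> 0 \<and> b' \<ge> 1 \<and> tval m c j = a' / b'" using IH0[OF wfc gc(2)] .
  have g0: "g \<noteq> 0" using wf gc by auto
  have mJ: "real (m J) \<ge> 1" using mpos wf by simp
  define V where "V = map (\<lambda>(g, c). tval m c) cs"
  define xs where "xs = map (\<lambda>(g, c). g * tval m c j) cs"
  obtain i where i: "i < length cs" "cs ! i = (g, c)" using gc(1) by (metis in_set_conv_nth)
  have bs: "sorted_wrt (\<lambda>x y. Max (supp x) < Min (supp y)) V" "\<forall>x\<in>set V. finite (supp x)"
    using wf(3) unfolding admissible_def block_seq_def V_def by auto
  have Vi: "V ! i = tval m c" using i unfolding V_def by simp
  have jsupp: "j \<in> supp (V ! i)" using Vi IH unfolding supp_def by simp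
  have zero: "\<forall>l<length xs. l \<noteq> i \<longrightarrow> xs ! l = 0"
  proof (intro allI impI)
    fix l assume l: "l < length xs" "l \<noteq> i"
    have "(V ! l) j = 0" using block_disj[OF bs _ _ l(2) jsupp] i l unfolding V_def xs_def by simp
    then show "xs ! l = 0" using l unfolding V_def xs_def by (simp add: split_beta)
  qed
  have "sum_list xs = xs ! i" using sum_list_single[OF _ zero] i unfolding xs_def by simp
  also have "\<dots> = g * (a' / b')" using i IH unfolding xs_def by simp
  finally have "tval m (Node J cs) j = (1 / real (m J)) * (g * (a' / b'))" unfolding xs_def by simp
  then have "tval m (Node J cs) j = a / b" using gc(3,4) mJ by (simp add: field_simps)
  moreover have "b \<ge> 1" using gc(4) IH mJ by (metis mult_mono' mult_1_right zero_le_one)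
  moreover have "a \<noteq> 0" using g0 IH gc(3) by simp
  ultimately show ?case by blast
qed



definition Sel :: "(nat \<Rightarrow> nat) \<Rightarrow> nat \<Rightarrow> ftree \<Rightarrow> real \<Rightarrow> nat set" where
  "Sel m k t B = {j. \<exists>a b. (j, a, b) \<in> set (leaves m t) \<and> b \<le> B \<and> 2 * k \<le> j}"

definition CS :: "(nat \<Rightarrow> nat) \<Rightarrow> (nat \<Rightarrow> nat) \<Rightarrow> nat \<Rightarrow> real \<Rightarrow> nat set" where
  "CS m n k B = {sum_list (map (gm n) L) | L. set L \<subseteq> {0..<k} \<and> real (prod_list (map (gm m) L)) \<le> B}"

definition Cf :: "(nat \<Rightarrow> nat) \<Rightarrow> (nat \<Rightarrow> nat) \<Rightarrow> nat \<Rightarrow> real \<Rightarrow> nat" where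
  "Cf m n k B = Max (insert 0 (CS m n k B))"

lemma gm_ge2:
  assumes mono: "\<forall>i\<ge>1. m i < m (Suc i)" and m1: "m 1 > 3"
  shows "gm m i \<ge> 2"
  using m_ge2[OF mono m1, of "2*i"] m1 unfolding gm_def by auto

lemma prod_ge_pow: "\<forall>x\<in>set L. 2 \<le> g x \<Longrightarrow> 2 ^ length L \<le> prod_list (map g L :: nat list)"
proof (induction L)
  case Nil then show ?case by simp
next
  case (Cons a L)
  then have "2 * 2 ^ length L \<le> g a * prod_list (map g L)" by (intro mult_mono) auto
  then show ?case by simp
qed

lemma CS_fin:
  assumes mono: "\<forall>i\<ge>1. m i < m (Suc i)" and m1: "m 1 > 3"
  shows "finite (CS m n k B)"
proof -
  have "CS m n k B \<subseteq> (\<lambda>L. sum_list (map (gm n) L)) ` {L. set L \<subseteq> {0..<k} \<and> length L \<le> nat \<lfloor>B\<rfloor>}"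
  proof
    fix v assume "v \<in> CS m n k B"
    then obtain L where L: "v = sum_list (map (gm n) L)" "set L \<subseteq> {0..<k}" "real (prod_list (map (gm m) L)) \<le> B"
      unfolding CS_def by auto
    have "length L < 2 ^ length L" by simp
    also have "\<dots> \<le> prod_list (map (gm m) L)" using gm_ge2[OF mono m1] by (intro prod_ge_pow) auto
    finally have "real (length L) \<le> B" using L(3) by linarith
    then have "length L \<le> nat \<lfloor>B\<rfloor>" by (rule le_nat_floor)
    then show "v \<in> (\<lambda>L. sum_list (map (gm n) L)) ` {L. set L \<subseteq> {0..<k} \<and> length L \<le> nat \<lfloor>B\<rfloor>}"
      using L by auto
  qed
  moreover have "finite {L. set L \<subseteq> {0..<k} \<and> length L \<le> nat \<lfloor>B\<rfloor>}"
    by (rule finite_lists_length_le) simp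
  ultimately show ?thesis using finite_subset by blast
qed

lemma Cf_step:
  assumes mono: "\<forall>i\<ge>1. m i < m (Suc i)" and m1: "m 1 > 3"
    and i: "i < k" and B': "B' \<ge> 1" and BB: "real (gm m i) * B' \<le> B"
  shows "Cf m n k B' + gm n i \<le> Cf m n k B"
proof -
  have z: "0 \<in> CS m n k B'" unfolding CS_def using B' by (intro CollectI exI[of _ "[]"]) auto
  have "Cf m n k B' \<in> CS m n k B'"
    unfolding Cf_def using z CS_fin[OF mono m1] by (metis Max_in empty_iff finite_insert insert_absorb)
  then obtain L where L: "Cf m n k B' = sum_list (map (gm n) L)" "set L \<subseteq> {0..<k}"
      "real (prod_list (map (gm m) L)) \<le> B'"
    unfolding CS_def by auto
  have "real (prod_list (map (gm m) (i # L))) = real (gm m i) * real (prod_list (map (gm m) L))" by simp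
  also have "\<dots> \<le> real (gm m i) * B'" using L(3) by (intro mult_left_mono) auto
  also have "\<dots> \<le> B" by (rule BB)
  finally have P: "real (prod_list (map (gm m) (i # L))) \<le> B" .
  have "sum_list (map (gm n) (i # L)) \<in> CS m n k B" unfolding CS_def
    using L(2) i P by (intro CollectI exI[of _ "i # L"]) auto
  then have "sum_list (map (gm n) (i # L)) \<le> Cf m n k B"
    unfolding Cf_def using CS_fin[OF mono m1] by simp
  then show ?thesis using L(1) by simp
qed

lemma Sel_Node:
  assumes "real (m J) > 0"
  shows "Sel m k (Node J cs) B = (\<Union>gc\<in>set cs. Sel m k (snd gc) (B / real (m J)))"
proof
  show "Sel m k (Node J cs) B \<subseteq> (\<Union>gc\<in>set cs. Sel m k (snd gc) (B / real (m J)))"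
  proof
    fix j assume "j \<in> Sel m k (Node J cs) B"
    then obtain a b where h: "(j, a, b) \<in> set (leaves m (Node J cs))" "b \<le> B" "2 * k \<le> j"
      unfolding Sel_def by blast
    then obtain g c a' b' where gc: "(g, c) \<in> set cs" "(j, a', b') \<in> set (leaves m c)" "b = real (m J) * b'"
      using leaves_Node_iff by metis
    have "b' \<le> B / real (m J)" using h(2) gc(3) assms by (simp add: pos_le_divide_eq mult.commute)
    then have "j \<in> Sel m k c (B / real (m J))" unfolding Sel_def using gc(2) h(3) by blast
    then show "j \<in> (\<Union>gc\<in>set cs. Sel m k (snd gc) (B / real (m J)))" using gc(1) by force
  qed
next
  show "(\<Union>gc\<in>set cs. Sel m k (snd gc) (B / real (m J))) \<subseteq> Sel m k (Node J cs) B"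
  proof
    fix j assume "j \<in> (\<Union>gc\<in>set cs. Sel m k (snd gc) (B / real (m J)))"
    then obtain g c where gc: "(g, c) \<in> set cs" "j \<in> Sel m k c (B / real (m J))" by auto
    then obtain a' b' where h: "(j, a', b') \<in> set (leaves m c)" "b' \<le> B / real (m J)" "2 * k \<le> j"
      unfolding Sel_def by auto
    have "(j, g * a', real (m J) * b') \<in> set (leaves m (Node J cs))"
      using leaves_Node_iff gc(1) h(1) by blast
    moreover have "real (m J) * b' \<le> B" using h(2) assms by (simp add: pos_le_divide_eq mult.commute)
    ultimately show "j \<in> Sel m k (Node J cs) B" unfolding Sel_def using h(3) by blast
  qed
qed

lemma Sel_sub_supp:
  assumes "\<forall>j\<ge>1. m j \<ge> (1::nat)" "wf_tree m n p q NN c"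
  shows "Sel m k c B \<subseteq> supp (tval m c)"
proof
  fix j assume "j \<in> Sel m k c B"
  then obtain a b where "(j, a, b) \<in> set (leaves m c)" unfolding Sel_def by auto
  then have "a \<noteq> 0 \<and> b \<ge> 1 \<and> tval m c j = a / b" using leaf_val[OF assms(1) assms(2)] by blast
  then show "j \<in> supp (tval m c)" unfolding supp_def by simp
qed

lemma Sel_ge1:
  assumes "\<forall>j\<ge>1. m j \<ge> (1::nat)" "wf_tree m n p q NN c" "j \<in> Sel m k c B"
  shows "1 \<le> B"
proof -
  obtain a b where "(j, a, b) \<in> set (leaves m c)" "b \<le> B" using assms(3) unfolding Sel_def by auto
  then show ?thesis using leaf_val[OF assms(1) assms(2)] by force
qed

lemma Sel_node_ge:
  assumes mpos: "\<forall>j\<ge>1. m j \<ge> (1::nat)" and wf: "wf_tree m n p q NN (Node J cs)"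
    and ne: "Sel m k (Node J cs) B \<noteq> {}"
  shows "real (m J) \<le> B"
proof -
  have J: "J \<ge> 1" using wf by simp
  then have mJ: "real (m J) \<ge> 1" using mpos by simp
  obtain gc j where gc: "gc \<in> set cs" "j \<in> Sel m k (snd gc) (B / real (m J))"
    using ne Sel_Node[of m J k cs B] mJ by auto
  have "wf_tree m n p q NN (snd gc)" using wf gc(1) by auto
  then have "1 \<le> B / real (m J)" using Sel_ge1[OF mpos _ gc(2)] by blast
  then show ?thesis using mJ by (simp add: le_divide_eq_1_pos)
qed



lemma tree_main:
  assumes mono: "\<forall>i\<ge>1. m i < m (Suc i)" and m1: "m 1 > 3"
    and nmono: "\<forall>i\<ge>1. n i < n (Suc i)" and n1: "n 1 \<ge> 1" and k: "k \<ge> 1"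
  shows "wf_tree m n p q NN t \<Longrightarrow> B < real (m (2*k)) \<Longrightarrow> Sel m k t B \<in> schreier (Cf m n k B)"
proof (induction t arbitrary: B rule: tree_induct)
  case (1 i)
  have "Sel m k (Leaf i) B = (if 1 \<le> B \<and> 2 * k \<le> i then {i} else {})" unfolding Sel_def by auto
  then show ?case using k by (auto simp: schreier_empty intro!: schreier_single)
next
  case (2 J cs)
  have mpos: "\<forall>j\<ge>1. m j \<ge> (1::nat)" using m_ge2[OF mono m1] by fastforce
  have npos: "\<And>j. j \<ge> 1 \<Longrightarrow> n j \<ge> 1" using mono_le[OF nmono, of 1] n1 by fastforce
  have wf: "J \<ge> 1" "\<forall>gc\<in>set cs. fst gc \<noteq> 0 \<and> tval m (snd gc) \<noteq> (\<lambda>_. 0) \<and> wf_tree m n p q NN (snd gc)"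
      "admissible (n J) (map (\<lambda>(g, c). tval m c) cs)"
      "even J \<longrightarrow> lq_ball q 1 (map fst cs)"
      "odd J \<longrightarrow> (\<forall>gc\<in>set cs. is_node (snd gc) \<and> even (node_index (snd gc)))
          \<and> distinct (map (\<lambda>(g, c). node_index c) cs)"
    using 2(2) by auto
  have mJ: "real (m J) \<ge> 1" using mpos wf(1) by simp
  define B' where "B' = B / real (m J)"
  have SN: "Sel m k (Node J cs) B = (\<Union>gc\<in>set cs. Sel m k (snd gc) B')"
    unfolding B'_def using Sel_Node[of m J k cs B] mJ by simp
  show ?case
  proof (cases "real (m J) \<le> B")
    case False
    then have "Sel m k (Node J cs) B = {}" using Sel_node_ge[OF mpos 2(2)] by blast
    then show ?thesis by (simp add: schreier_empty)
  next
    case True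
    note BJ = True
    have B'1: "B' \<ge> 1" unfolding B'_def using True mJ by (simp add: le_divide_eq_1_pos)
    have B'B: "B' \<le> B" unfolding B'_def using mJ True by (simp add: divide_le_eq mult_le_cancel_left1)
    have B'k: "B' < real (m (2*k))" using B'B 2(3) by simp
    have wfc: "\<And>gc. gc \<in> set cs \<Longrightarrow> wf_tree m n p q NN (snd gc)" using wf(2) by auto
    have IH: "\<And>gc. gc \<in> set cs \<Longrightarrow> Sel m k (snd gc) B' \<in> schreier (Cf m n k B')"
      using 2(1) wfc B'k by blast
    have bs: "sorted_wrt (\<lambda>x y. Max (supp x) < Min (supp y)) (map (\<lambda>(g, c). tval m c) cs)"
      "\<forall>x\<in>set (map (\<lambda>(g, c). tval m c) cs). finite (supp x)"
      "{Min (supp x) |x. x \<in> set (map (\<lambda>(g, c). tval m c) cs)} \<in> schreier (n J)"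
      using wf(3) unfolding admissible_def block_seq_def by auto
    have fin: "\<And>gc. gc \<in> set cs \<Longrightarrow> finite (supp (tval m (snd gc)))"
      using bs(2) by (auto simp: split_beta)
    have nemp: "\<And>gc. gc \<in> set cs \<Longrightarrow> supp (tval m (snd gc)) \<noteq> {}"
    proof -
      fix gc assume "gc \<in> set cs"
      then have "tval m (snd gc) \<noteq> (\<lambda>_. 0)" using wf(2) by auto
      then obtain i where "tval m (snd gc) i \<noteq> 0" by auto
      then show "supp (tval m (snd gc)) \<noteq> {}" unfolding supp_def by auto
    qed
    have sub: "\<And>gc. gc \<in> set cs \<Longrightarrow> Sel m k (snd gc) B' \<subseteq> supp (tval m (snd gc))"
      using Sel_sub_supp[OF mpos] wfc by blast
    have srt0: "sorted_wrt (\<lambda>gc gc'. Max (supp (tval m (snd gc))) < Min (supp (tval m (snd gc')))) cs"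
      using bs(1) by (simp add: sorted_wrt_map split_beta)
    have rel: "\<And>gc gc'. gc \<in> set cs \<Longrightarrow> gc' \<in> set cs \<Longrightarrow>
        Max (supp (tval m (snd gc))) < Min (supp (tval m (snd gc'))) \<Longrightarrow>
        Min (supp (tval m (snd gc))) < Min (supp (tval m (snd gc')))
        \<and> (\<forall>x\<in>Sel m k (snd gc) B'. \<forall>y\<in>Sel m k (snd gc') B'. x < y)"
    proof -
      fix gc gc' assume a: "gc \<in> set cs" "gc' \<in> set cs"
        "Max (supp (tval m (snd gc))) < Min (supp (tval m (snd gc')))"
      have "Min (supp (tval m (snd gc))) \<le> Max (supp (tval m (snd gc)))"
        using fin[OF a(1)] nemp[OF a(1)] by simp
      moreover have "\<forall>x\<in>Sel m k (snd gc) B'. \<forall>y\<in>Sel m k (snd gc') B'. x < y"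
      proof (intro ballI)
        fix x y assume xy: "x \<in> Sel m k (snd gc) B'" "y \<in> Sel m k (snd gc') B'"
        have "x \<le> Max (supp (tval m (snd gc)))" using sub[OF a(1)] xy(1) fin[OF a(1)] by auto
        moreover have "Min (supp (tval m (snd gc'))) \<le> y" using sub[OF a(2)] xy(2) fin[OF a(2)] by auto
        ultimately show "x < y" using a(3) by simp
      qed
      ultimately show "Min (supp (tval m (snd gc))) < Min (supp (tval m (snd gc')))
        \<and> (\<forall>x\<in>Sel m k (snd gc) B'. \<forall>y\<in>Sel m k (snd gc') B'. x < y)" using a(3) by simp
    qed
    define cf where "cf = filter (\<lambda>gc. Sel m k (snd gc) B' \<noteq> {}) cs"
    have srtf: "sorted_wrt (\<lambda>gc gc'. Max (supp (tval m (snd gc))) < Min (supp (tval m (snd gc')))) cf"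
      unfolding cf_def using srt0 by (simp add: sorted_wrt_filter)
    have cfs: "set cf \<subseteq> set cs" unfolding cf_def by auto
    have Uf: "Sel m k (Node J cs) B = (\<Union>gc\<in>set cf. Sel m k (snd gc) B')"
      unfolding SN cf_def by auto
    show ?thesis
    proof (cases "even J")
      case True
      then obtain i where i: "J = 2 * i" by auto
      have i1: "i \<ge> 1" using i wf(1) by simp
      have ik: "i < k"
      proof (rule ccontr)
        assume "\<not> i < k"
        then have "m (2*k) \<le> m J" using mono_le[OF mono, of "2*k" J] i k by simp
        then have "real (m (2*k)) \<le> real (m J)" by simp
        then show False using BJ 2(3) by linarith
      qed
      define ps where "ps = map (\<lambda>gc. (Min (supp (tval m (snd gc))), Sel m k (snd gc) B')) cf"
      have ch: "comp_hyp (Cf m n k B') {Min (supp x) |x. x \<in> set (map (\<lambda>(g, c). tval m c) cs)} ps"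
        unfolding comp_hyp_def
      proof
        show "sorted_wrt prel ps" unfolding ps_def sorted_wrt_map
          using srtf
        proof (rule sorted_wrt_mono_rel[rotated])
          fix gc gc' assume a: "gc \<in> set cf" "gc' \<in> set cf"
            "Max (supp (tval m (snd gc))) < Min (supp (tval m (snd gc')))"
          then have "gc \<in> set cs" "gc' \<in> set cs" using cfs by auto
          note r = rel[OF this a(3)]
          then show "prel (Min (supp (tval m (snd gc))), Sel m k (snd gc) B')
              (Min (supp (tval m (snd gc'))), Sel m k (snd gc') B')"
            unfolding prel_def fst_conv snd_conv by blast
        qed
        show "\<forall>p\<in>set ps. fst p \<in> {Min (supp x) |x. x \<in> set (map (\<lambda>(g, c). tval m c) cs)} \<and>
          snd p \<noteq> {} \<and> snd p \<in> schreier (Cf m n k B') \<and> (\<forall>x\<in>snd p. fst p \<le> x)"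
        proof
          fix p assume "p \<in> set ps"
          then obtain gc where gc: "gc \<in> set cf" "p = (Min (supp (tval m (snd gc))), Sel m k (snd gc) B')"
            unfolding ps_def by auto
          have gcs: "gc \<in> set cs" using gc(1) cfs by auto
          have "fst p \<in> {Min (supp x) |x. x \<in> set (map (\<lambda>(g, c). tval m c) cs)}"
            using gc(2) gcs by (force simp: split_beta)
          moreover have "snd p \<noteq> {}" using gc unfolding cf_def by auto
          moreover have "snd p \<in> schreier (Cf m n k B')" using IH[OF gcs] gc(2) by simp
          moreover have "\<forall>x\<in>snd p. fst p \<le> x" using gc(2) sub[OF gcs] fin[OF gcs] by auto
          ultimately show "fst p \<in> {Min (supp x) |x. x \<in> set (map (\<lambda>(g, c). tval m c) cs)} \<and>
            snd p \<noteq> {} \<and> snd p \<in> schreier (Cf m n k B') \<and> (\<forall>x\<in>snd p. fst p \<le> x)" by blast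
        qed
      qed
      have "\<Union>(snd ` set ps) \<in> schreier (Cf m n k B' + n J)" using comp_lemma[OF bs(3) ch] .
      moreover have "\<Union>(snd ` set ps) = Sel m k (Node J cs) B" unfolding Uf ps_def by auto
      moreover have "Cf m n k B' + n J \<le> Cf m n k B"
      proof -
        have g: "gm m i = m J" "gm n i = n J" using i i1 unfolding gm_def by auto
        have "real (gm m i) * B' \<le> B" using g(1) mJ unfolding B'_def by simp
        from Cf_step[OF mono m1 ik B'1 this, of n] show ?thesis using g(2) by simp
      qed
      ultimately show ?thesis using schreier_mono by metis
    next
      case False
      define Fs where "Fs = map (\<lambda>gc. Sel m k (snd gc) B') cf"
      have nodes: "\<forall>gc\<in>set cs. is_node (snd gc) \<and> even (node_index (snd gc))"
        and dist: "distinct (map (\<lambda>(g, c). node_index c) cs)" using wf(5) False by auto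
      have "\<Union>(set Fs) \<in> schreier (Suc (Cf m n k B'))"
      proof (rule schreier_SucI)
        show "\<forall>F\<in>set Fs. F \<in> schreier (Cf m n k B') \<and> F \<noteq> {}"
          unfolding Fs_def cf_def using IH by auto
        show "sorted_wrt (\<lambda>A B. \<forall>x\<in>A. \<forall>y\<in>B. x < y) Fs" unfolding Fs_def sorted_wrt_map
          using srtf
        proof (rule sorted_wrt_mono_rel[rotated])
          fix gc gc' assume a: "gc \<in> set cf" "gc' \<in> set cf"
            "Max (supp (tval m (snd gc))) < Min (supp (tval m (snd gc')))"
          then have "gc \<in> set cs" "gc' \<in> set cs" using cfs by auto
          note r = rel[OF this a(3)]
          then show "\<forall>x\<in>Sel m k (snd gc) B'. \<forall>y\<in>Sel m k (snd gc') B'. x < y"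
            by blast
        qed
        assume ne: "Fs \<noteq> []"
        have "length Fs \<le> k - 1"
        proof -
          have d: "distinct (map (\<lambda>(g, c). node_index c) cf)" unfolding cf_def
            using dist by (rule distinct_map_filter)
          have "set (map (\<lambda>(g, c). node_index c) cf) \<subseteq> (\<lambda>i. 2 * i) ` {1..<k}"
          proof
            fix x assume "x \<in> set (map (\<lambda>(g, c). node_index c) cf)"
            then obtain gc where gc: "gc \<in> set cf" "x = node_index (snd gc)" by (auto simp: split_beta)
            have gcs: "gc \<in> set cs" using gc(1) cfs by auto
            have nd: "is_node (snd gc)" "even (node_index (snd gc))" using nodes gcs by auto
            then obtain J' cs' where c: "snd gc = Node J' cs'" unfolding is_node_def
              by (cases "snd gc") auto
            have x: "x = J'" using gc(2) c unfolding node_index_def by simp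
            have wfc': "wf_tree m n p q NN (Node J' cs')" using wfc[OF gcs] c by simp
            then have J'1: "J' \<ge> 1" by simp
            have "Sel m k (Node J' cs') B' \<noteq> {}" using gc(1) c unfolding cf_def by auto
            then have "real (m J') \<le> B'" using Sel_node_ge[OF mpos wfc'] by blast
            then have mJ'k: "m J' < m (2*k)" using B'k by linarith
            have J'k: "J' < 2 * k"
            proof (rule ccontr)
              assume "\<not> J' < 2 * k"
              then have "m (2*k) \<le> m J'" using mono_le[OF mono, of "2*k" J'] k by simp
              then show False using mJ'k by simp
            qed
            obtain i where "J' = 2 * i" using nd(2) c x unfolding node_index_def by auto
            then show "x \<in> (\<lambda>i. 2 * i) ` {1..<k}" using x J'1 J'k by auto
          qed
          then have "card (set (map (\<lambda>(g, c). node_index c) cf)) \<le> card ((\<lambda>i. 2 * i) ` {1..<k})"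
            by (intro card_mono) auto
          also have "\<dots> \<le> card {1..<k}" by (rule card_image_le) simp
          finally have "length (map (\<lambda>(g, c). node_index c) cf) \<le> k - 1"
            using distinct_card[OF d] by simp
          then show ?thesis unfolding Fs_def by simp
        qed
        moreover have "2 * k \<le> Min (hd Fs)"
        proof -
          have h: "hd Fs \<in> set Fs" using ne by simp
          then obtain gc where gc: "gc \<in> set cf" "hd Fs = Sel m k (snd gc) B'" unfolding Fs_def by auto
          have gcs: "gc \<in> set cs" using gc(1) cfs by auto
          have "hd Fs \<noteq> {}" using gc unfolding cf_def by auto
          moreover have "finite (hd Fs)" using gc(2) sub[OF gcs] fin[OF gcs] finite_subset by metis
          ultimately have "Min (hd Fs) \<in> Sel m k (snd gc) B'" using gc(2) Min_in by metis
          then show ?thesis unfolding Sel_def by blast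
        qed
        ultimately show "length Fs \<le> Min (hd Fs)" using k by simp
      qed
      moreover have "\<Union>(set Fs) = Sel m k (Node J cs) B" unfolding Uf Fs_def by auto
      moreover have "Suc (Cf m n k B') \<le> Cf m n k B"
      proof -
        define i where "i = J div 2"
        have Ji: "J = 2 * i + 1" using False unfolding i_def by simp
        have gmi: "gm m i \<le> m J"
        proof (cases "i = 0")
          case True then show ?thesis using Ji unfolding gm_def by simp
        next
          case False then show ?thesis using Ji mono_le[OF mono, of "2*i" J] unfolding gm_def by simp
        qed
        have gni: "gm n i \<ge> 1" unfolding gm_def using npos n1 by auto
        have ik: "i < k"
        proof (rule ccontr)
          assume "\<not> i < k"
          then have "m (2*k) \<le> gm m i" using mono_le[OF mono, of "2*k" "2*i"] k unfolding gm_def by auto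
          then have "real (m (2*k)) \<le> real (m J)" using gmi by simp
          then show False using BJ 2(3) by linarith
        qed
        have "real (gm m i) * B' \<le> real (m J) * B'" using gmi B'1 by (intro mult_right_mono) auto
        also have "\<dots> = B" unfolding B'_def using mJ by simp
        finally have "real (gm m i) * B' \<le> B" .
        from Cf_step[OF mono m1 ik B'1 this, of n] show ?thesis using gni by simp
      qed
      ultimately show ?thesis using schreier_mono by metis
    qed
  qed
qed



lemma cond_iff:
  fixes a b M :: real
  assumes "a \<noteq> 0" "b \<ge> 1" "M > 0"
  shows "(2 * \<bar>a\<bar> / M \<le> \<bar>a\<bar> / b) \<longleftrightarrow> b \<le> M / 2"
proof -
  have pa: "\<bar>a\<bar> > 0" using assms by simp
  have "(2 * \<bar>a\<bar> / M \<le> \<bar>a\<bar> / b) \<longleftrightarrow> 2 * \<bar>a\<bar> * b \<le> \<bar>a\<bar> * M"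
    using assms by (simp add: divide_le_eq le_divide_eq field_simps)
  also have "\<dots> \<longleftrightarrow> 2 * b \<le> M" using pa by (simp add: mult.commute mult.left_commute)
  also have "\<dots> \<longleftrightarrow> b \<le> M / 2" by linarith
  finally show ?thesis .
qed

theorem mainTheorem10:
  fixes m n s :: "nat \<Rightarrow> nat" and p q :: real and NN :: "functional set"
    and x :: functional and k :: nat and g0 :: real and t :: ftree
  assumes "MN_seqs m n s"
    and "1 < p" and "1 < q" and "1 / p + 1 / q = 1"
    and "MNq_schreier m n p q NN"
    and "x \<in> NN"
    and "k \<ge> 1"
    and "functional_tree m n p q NN x g0 t"
  shows "{j. \<exists>a b. (j, a, b) \<in> set (leaves m t)
            \<and> \<bar>x j\<bar> \<ge> 2 * \<bar>g0 * a\<bar> / real (m (2 * k)) \<and> j \<ge> 2 * k}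
         \<in> schreier (p_seq n s k - 1)"
proof -
  have mono: "\<forall>i\<ge>1. m i < m (Suc i)" and m1: "m 1 > 3"
    and nmono: "\<forall>i\<ge>1. n i < n (Suc i)" and n1: "n 1 \<ge> 1"
    using assms(1) unfolding MN_seqs_def by auto
  have g0: "\<bar>g0\<bar> = 1" and xdef: "x = (\<lambda>i. g0 * tval m t i)" and wf: "wf_tree m n p q NN t"
    using assms(8) unfolding functional_tree_def by auto
  have mpos: "\<forall>j\<ge>1. m j \<ge> (1::nat)" using m_ge2[OF mono m1] by fastforce
  define M where "M = real (m (2 * k))"
  have "m (2 * k) \<ge> 1" using mpos assms(7) by simp
  then have M0: "M > 0" unfolding M_def by simp
  have eq: "{j. \<exists>a b. (j, a, b) \<in> set (leaves m t)
            \<and> \<bar>x j\<bar> \<ge> 2 * \<bar>g0 * a\<bar> / real (m (2 * k)) \<and> j \<ge> 2 * k} = Sel m k t (M / 2)"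
  proof -
    have "\<And>j a b. (j, a, b) \<in> set (leaves m t) \<Longrightarrow>
        (\<bar>x j\<bar> \<ge> 2 * \<bar>g0 * a\<bar> / real (m (2 * k))) \<longleftrightarrow> b \<le> M / 2"
    proof -
      fix j a b assume l: "(j, a, b) \<in> set (leaves m t)"
      have v: "a \<noteq> 0" "b \<ge> 1" "tval m t j = a / b" using leaf_val[OF mpos wf l] by auto
      have "\<bar>x j\<bar> = \<bar>a\<bar> / b" using v g0 unfolding xdef by (simp add: abs_mult)
      moreover have "\<bar>g0 * a\<bar> = \<bar>a\<bar>" using g0 by (simp add: abs_mult)
      ultimately show "(\<bar>x j\<bar> \<ge> 2 * \<bar>g0 * a\<bar> / real (m (2 * k))) \<longleftrightarrow> b \<le> M / 2"
        using cond_iff[OF v(1) v(2) M0] unfolding M_def by simp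
    qed
    then show ?thesis unfolding Sel_def by blast
  qed
  have S: "Sel m k t (M / 2) \<in> schreier (Cf m n k (M / 2))"
    using tree_main[OF mono m1 nmono n1 assms(7) wf] M0 unfolding M_def by simp
  have "Cf m n k (M / 2) \<le> p_seq n s k - 1"
    unfolding Cf_def
  proof (rule Max.boundedI)
    show "finite (insert 0 (CS m n k (M / 2)))" using CS_fin[OF mono m1] by simp
    show "insert 0 (CS m n k (M / 2)) \<noteq> {}" by simp
    fix v assume "v \<in> insert 0 (CS m n k (M / 2))"
    then show "v \<le> p_seq n s k - 1"
    proof
      assume "v \<in> CS m n k (M / 2)"
      then obtain L where L: "v = sum_list (map (gm n) L)" "set L \<subseteq> {0..<k}"
          "real (prod_list (map (gm m) L)) \<le> M / 2"
        unfolding CS_def by auto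
      have "real (prod_list (map (gm m) L)) < M" using L(3) M0 by simp
      then have "prod_list (map (gm m) L) < m (2 * k)" unfolding M_def by simp
      then have "v < p_seq n s k" using num_main[OF assms(1) assms(7) L(2)] L(1) by simp
      then show ?thesis by simp
    qed simp
  qed
  then show ?thesis using eq S schreier_mono by metis
qed


end
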